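(* Let $E$ be a graph. If the collection of unitary equivalence classes of irreducible $*$-representations of $C^*(E)$ is countable (finite or countably infinite), then $E$ has no cycles.
   Context: A graph $E=(E^0,E^1,r,s)$ has vertex set $E^0$, edge set $E^1$, range and source maps; no countability assumed. A vertex is regular if it emits a finite nonzero number of edges. A cycle is a path $e_1\cdots e_n$ ($n\ge1$, $r(e_i)=s(e_{i+1})$) with $s(e_1)=r(e_n)$. $C^*(E)$ is the universal $C^*$-algebra generated by mutually orthogonal projections $p_v$ ($v\in E^0$) and partial isometries $s_e$ ($e\in E^1$) with mutually orthogonal ranges, with $s_e^*s_e=p_{r(e)}$, $s_es_e^*\le p_{s(e)}$, and $p_v=\sum_{s(e)=v}s_es_e^*$ for each regular $v$. Two $*$-representations are unitarily equivalent if intertwined by a unitary. *)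

theory Defs
  imports "HOL-Analysis.Analysis"
begin

text \<open>A graph is given by a vertex set E0 :: 'v set, an edge set E1 :: 'e set and
  range and source maps r, s :: 'e => 'v (assumed to map E1 into E0).\<close>

definition regular_vertex :: "'e set \<Rightarrow> ('e \<Rightarrow> 'v) \<Rightarrow> 'v \<Rightarrow> bool" where
  "regular_vertex E1 src v \<longleftrightarrow> finite {e \<in> E1. src e = v} \<and> {e \<in> E1. src e = v} \<noteq> {}"

definition has_cycle :: "'e set \<Rightarrow> ('e \<Rightarrow> 'v) \<Rightarrow> ('e \<Rightarrow> 'v) \<Rightarrow> bool" where
  "has_cycle E1 rng src \<longleftrightarrow>
     (\<exists>es. es \<noteq> [] \<and> set es \<subseteq> E1
        \<and> (\<forall>i. Suc i < length es \<longrightarrow> rng (es ! i) = src (es ! Suc i))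
        \<and> src (hd es) = rng (last es))"

text \<open>Every Hilbert space is unitarily equivalent to some l2(X); vectors of l2(X) are
  functions vanishing outside X.\<close>

type_synonym 'i opr = "('i \<Rightarrow> complex) \<Rightarrow> ('i \<Rightarrow> complex)"

definition l2 :: "'i set \<Rightarrow> ('i \<Rightarrow> complex) set" where
  "l2 X = {f. (\<forall>i. i \<notin> X \<longrightarrow> f i = 0) \<and> (\<lambda>i. (cmod (f i))^2) summable_on X}"

definition l2inner :: "'i set \<Rightarrow> ('i \<Rightarrow> complex) \<Rightarrow> ('i \<Rightarrow> complex) \<Rightarrow> complex" where
  "l2inner X f g = (\<Sum>\<^sub>\<infinity>i\<in>X. cnj (f i) * g i)"

definition l2norm :: "'i set \<Rightarrow> ('i \<Rightarrow> complex) \<Rightarrow> real" where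
  "l2norm X f = sqrt (\<Sum>\<^sub>\<infinity>i\<in>X. (cmod (f i))^2)"

definition zero_op :: "'i opr" where
  "zero_op = (\<lambda>f i. 0)"

definition bop :: "'i set \<Rightarrow> 'i opr \<Rightarrow> bool" where
  "bop X T \<longleftrightarrow>
     (\<forall>f\<in>l2 X. T f \<in> l2 X)
   \<and> (\<forall>f\<in>l2 X. \<forall>g\<in>l2 X. \<forall>a b. T (\<lambda>i. a * f i + b * g i) = (\<lambda>i. a * T f i + b * T g i))
   \<and> (\<exists>C. \<forall>f\<in>l2 X. l2norm X (T f) \<le> C * l2norm X f)
   \<and> (\<forall>f. f \<notin> l2 X \<longrightarrow> T f = (\<lambda>i. 0))"

definition adj :: "'i set \<Rightarrow> 'i opr \<Rightarrow> 'i opr" where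
  "adj X T = (THE S. bop X S \<and> (\<forall>f\<in>l2 X. \<forall>g\<in>l2 X. l2inner X (T f) g = l2inner X f (S g)))"

definition is_proj :: "'i set \<Rightarrow> 'i opr \<Rightarrow> bool" where
  "is_proj X P \<longleftrightarrow> bop X P \<and> P \<circ> P = P \<and> adj X P = P"

definition op_le :: "'i set \<Rightarrow> 'i opr \<Rightarrow> 'i opr \<Rightarrow> bool" where
  "op_le X A B \<longleftrightarrow> (\<forall>f\<in>l2 X. Im (l2inner X f (\<lambda>i. B f i - A f i)) = 0 \<and> 0 \<le> Re (l2inner X f (\<lambda>i. B f i - A f i)))"

text \<open>By the universal property of C*(E), *-representations of C*(E) on l2(X) correspond
  bijectively to Cuntz-Krieger E-families (P, S) of operators on l2(X).\<close>
definition ck_family :: "'v set \<Rightarrow> 'e set \<Rightarrow> ('e \<Rightarrow> 'v) \<Rightarrow> ('e \<Rightarrow> 'v) \<Rightarrow>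
     'i set \<Rightarrow> ('v \<Rightarrow> 'i opr) \<Rightarrow> ('e \<Rightarrow> 'i opr) \<Rightarrow> bool" where
  "ck_family E0 E1 rng src X P S \<longleftrightarrow>
     (\<forall>v\<in>E0. is_proj X (P v))
   \<and> (\<forall>v\<in>E0. \<forall>w\<in>E0. v \<noteq> w \<longrightarrow> P v \<circ> P w = zero_op)
   \<and> (\<forall>e\<in>E1. bop X (S e))
   \<and> (\<forall>e\<in>E1. \<forall>e'\<in>E1. e \<noteq> e' \<longrightarrow> (\<forall>f\<in>l2 X. \<forall>g\<in>l2 X. l2inner X (S e f) (S e' g) = 0))
   \<and> (\<forall>e\<in>E1. adj X (S e) \<circ> S e = P (rng e))
   \<and> (\<forall>e\<in>E1. op_le X (S e \<circ> adj X (S e)) (P (src e)))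
   \<and> (\<forall>v\<in>E0. regular_vertex E1 src v \<longrightarrow>
        P v = (\<lambda>f i. \<Sum>e\<in>{e \<in> E1. src e = v}. S e (adj X (S e) f) i))"

definition closed_subspace :: "'i set \<Rightarrow> ('i \<Rightarrow> complex) set \<Rightarrow> bool" where
  "closed_subspace X K \<longleftrightarrow>
     K \<subseteq> l2 X \<and> (\<lambda>i. 0) \<in> K
   \<and> (\<forall>f\<in>K. \<forall>g\<in>K. \<forall>a b. (\<lambda>i. a * f i + b * g i) \<in> K)
   \<and> (\<forall>f\<in>l2 X. (\<forall>\<epsilon>>0. \<exists>g\<in>K. l2norm X (\<lambda>i. f i - g i) < \<epsilon>) \<longrightarrow> f \<in> K)"

definition ck_irreducible :: "'v set \<Rightarrow> 'e set \<Rightarrow> ('e \<Rightarrow> 'v) \<Rightarrow> ('e \<Rightarrow> 'v) \<Rightarrow>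
     'i set \<Rightarrow> ('v \<Rightarrow> 'i opr) \<Rightarrow> ('e \<Rightarrow> 'i opr) \<Rightarrow> bool" where
  "ck_irreducible E0 E1 rng src X P S \<longleftrightarrow>
     ck_family E0 E1 rng src X P S
   \<and> ((\<exists>v\<in>E0. P v \<noteq> zero_op) \<or> (\<exists>e\<in>E1. S e \<noteq> zero_op))
   \<and> (\<forall>K. closed_subspace X K \<and> (\<forall>v\<in>E0. P v ` K \<subseteq> K)
          \<and> (\<forall>e\<in>E1. S e ` K \<subseteq> K \<and> adj X (S e) ` K \<subseteq> K)
        \<longrightarrow> K = {\<lambda>i. 0} \<or> K = l2 X)"

definition unitary_map :: "'i set \<Rightarrow> 'i set \<Rightarrow> (('i \<Rightarrow> complex) \<Rightarrow> ('i \<Rightarrow> complex)) \<Rightarrow> bool" where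
  "unitary_map X Y U \<longleftrightarrow>
     bij_betw U (l2 X) (l2 Y)
   \<and> (\<forall>f\<in>l2 X. \<forall>g\<in>l2 X. \<forall>a b. U (\<lambda>i. a * f i + b * g i) = (\<lambda>i. a * U f i + b * U g i))
   \<and> (\<forall>f\<in>l2 X. \<forall>g\<in>l2 X. l2inner Y (U f) (U g) = l2inner X f g)"

definition unit_equiv :: "'v set \<Rightarrow> 'e set \<Rightarrow>
     ('i set \<times> ('v \<Rightarrow> 'i opr) \<times> ('e \<Rightarrow> 'i opr)) \<Rightarrow>
     ('i set \<times> ('v \<Rightarrow> 'i opr) \<times> ('e \<Rightarrow> 'i opr)) \<Rightarrow> bool" where
  "unit_equiv E0 E1 a b \<longleftrightarrow>
     (case a of (X, P, S) \<Rightarrow> case b of (Y, Q, T) \<Rightarrow>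
       \<exists>U. unitary_map X Y U
         \<and> (\<forall>v\<in>E0. \<forall>f\<in>l2 X. U (P v f) = Q v (U f))
         \<and> (\<forall>e\<in>E1. \<forall>f\<in>l2 X. U (S e f) = T e (U f)))"

text \<open>All irreducible representations of C*(E), realised on l2(X) with X a subset of
  ('v + 'e) list; this index type is large enough to carry every irreducible
  representation of C*(E) up to unitary equivalence.\<close>
definition irreps :: "'v set \<Rightarrow> 'e set \<Rightarrow> ('e \<Rightarrow> 'v) \<Rightarrow> ('e \<Rightarrow> 'v) \<Rightarrow>
     (('v + 'e) list set \<times> ('v \<Rightarrow> ('v + 'e) list opr) \<times> ('e \<Rightarrow> ('v + 'e) list opr)) set" where
  "irreps E0 E1 rng src = {(X, P, S). ck_irreducible E0 E1 rng src X P S}"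

definition irrep_classes where
  "irrep_classes E0 E1 rng src =
     irreps E0 E1 rng src // {(a, b). a \<in> irreps E0 E1 rng src \<and> b \<in> irreps E0 E1 rng src
                                     \<and> unit_equiv E0 E1 a b}"

end

theory Submission
  imports Defs
begin


abbreviation nsq :: "('i \<Rightarrow> complex) \<Rightarrow> 'i \<Rightarrow> real" where
  "nsq f \<equiv> (\<lambda>i. (cmod (f i))^2)"

lemma l2_zero[simp]: "(\<lambda>i. 0) \<in> l2 X"
  by (simp add: l2_def)

lemma l2D: "f \<in> l2 X \<Longrightarrow> i \<notin> X \<Longrightarrow> f i = 0"
  by (simp add: l2_def)

lemma l2_summ: "f \<in> l2 X \<Longrightarrow> nsq f summable_on X"
  by (simp add: l2_def)

lemma l2_lin:
  assumes f: "f \<in> l2 X" and g: "g \<in> l2 X"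
  shows "(\<lambda>i. a * f i + b * g i) \<in> l2 X"
proof -
  have s: "(\<lambda>i. 2 * (cmod a)^2 * nsq f i + 2 * (cmod b)^2 * nsq g i) summable_on X"
    using l2_summ[OF f] l2_summ[OF g]
    by (intro summable_on_add summable_on_cmult_right)
  have "nsq (\<lambda>i. a * f i + b * g i) i \<le> 2 * (cmod a)^2 * nsq f i + 2 * (cmod b)^2 * nsq g i" for i
  proof -
    have "cmod (a * f i + b * g i) \<le> cmod a * cmod (f i) + cmod b * cmod (g i)"
      by (metis norm_mult norm_triangle_ineq)
    hence "(cmod (a * f i + b * g i))^2 \<le> (cmod a * cmod (f i) + cmod b * cmod (g i))^2"
      by (simp add: power_mono)
    also have "\<dots> \<le> 2 * (cmod a * cmod (f i))^2 + 2 * (cmod b * cmod (g i))^2"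
      using sum_squares_bound[of "cmod a * cmod (f i)" "cmod b * cmod (g i)"] by (simp add: power2_sum)
    finally show ?thesis by (simp add: power_mult_distrib)
  qed
  hence "nsq (\<lambda>i. a * f i + b * g i) summable_on X"
    by (intro summable_on_comparison_test[OF s]) auto
  thus ?thesis using f g by (auto simp: l2_def)
qed

lemma l2_inner_summable:
  assumes f: "f \<in> l2 X" and g: "g \<in> l2 X"
  shows "(\<lambda>i. cnj (f i) * g i) summable_on X"
proof -
  have s: "(\<lambda>i. nsq f i + nsq g i) summable_on X"
    using l2_summ[OF f] l2_summ[OF g] by (intro summable_on_add)
  have "norm (cnj (f i) * g i) \<le> nsq f i + nsq g i" for i
  proof -
    have "norm (cnj (f i) * g i) = cmod (f i) * cmod (g i)" by (simp add: norm_mult)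
    also have "\<dots> \<le> nsq f i + nsq g i"
      using sum_squares_bound[of "cmod (f i)" "cmod (g i)"] mult_nonneg_nonneg[OF norm_ge_zero norm_ge_zero, of "f i" "g i"]
      by linarith
    finally show ?thesis .
  qed
  hence "(\<lambda>i. norm (cnj (f i) * g i)) summable_on X"
    by (intro summable_on_comparison_test[OF s]) auto
  thus ?thesis by (rule abs_summable_summable)
qed

lemma infsum_of_real_c: "(\<Sum>\<^sub>\<infinity>i\<in>X. complex_of_real (h i)) = of_real (\<Sum>\<^sub>\<infinity>i\<in>X. h i)"
proof (rule infsum_bounded_linear_strong[OF _ bounded_linear_of_real])
  show "((\<lambda>x. complex_of_real (h x)) summable_on X) \<longleftrightarrow> (h summable_on X)"
  proof
    assume "(\<lambda>x. complex_of_real (h x)) summable_on X"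
    from summable_on_Re[OF this] show "h summable_on X" by simp
  qed (rule summable_on_of_real)
qed

lemma l2inner_self: "l2inner X f f = of_real (\<Sum>\<^sub>\<infinity>i\<in>X. nsq f i)"
proof -
  have "l2inner X f f = (\<Sum>\<^sub>\<infinity>i\<in>X. of_real (nsq f i))"
    unfolding l2inner_def by (intro infsum_cong) (metis complex_norm_square mult.commute of_real_power)
  also have "\<dots> = of_real (\<Sum>\<^sub>\<infinity>i\<in>X. nsq f i)"
    by (rule infsum_of_real_c)
  finally show ?thesis .
qed



lemma l2inner_diff:
  assumes "h \<in> l2 X" "a \<in> l2 X" "b \<in> l2 X"
  shows "l2inner X h (\<lambda>i. a i - b i) = l2inner X h a - l2inner X h b"
proof -
  have "l2inner X h (\<lambda>i. a i - b i) = (\<Sum>\<^sub>\<infinity>i\<in>X. cnj (h i) * a i + (- (cnj (h i) * b i)))"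
    unfolding l2inner_def by (intro infsum_cong) (simp add: algebra_simps)
  also have "\<dots> = l2inner X h a + (\<Sum>\<^sub>\<infinity>i\<in>X. - (cnj (h i) * b i))"
    unfolding l2inner_def using assms
    by (intro infsum_add l2_inner_summable summable_on_uminus[THEN iffD2])
  also have "\<dots> = l2inner X h a - l2inner X h b"
    by (simp add: infsum_uminus l2inner_def)
  finally show ?thesis .
qed

lemma l2_diff: "a \<in> l2 X \<Longrightarrow> b \<in> l2 X \<Longrightarrow> (\<lambda>i. a i - b i) \<in> l2 X"
  using l2_lin[of a X b 1 "-1"] by simp

lemma l2_zero_if_self:
  assumes a: "a \<in> l2 X" and h: "l2inner X a a = 0"
  shows "a = (\<lambda>i. 0)"
proof
  fix i
  show "a i = 0"
  proof (cases "i \<in> X")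
    case True
    have "(\<Sum>\<^sub>\<infinity>i\<in>X. nsq a i) = 0" using h by (simp add: l2inner_self)
    hence "nsq a i = 0"
      by (intro nonneg_infsum_le_0D[OF _ l2_summ[OF a] _ True]) auto
    thus ?thesis by simp
  next
    case False thus ?thesis using a by (simp add: l2D)
  qed
qed

lemma l2_sep:
  assumes a: "a \<in> l2 X" and b: "b \<in> l2 X" and h: "\<And>h. h \<in> l2 X \<Longrightarrow> l2inner X h a = l2inner X h b"
  shows "a = b"
proof -
  let ?d = "\<lambda>i. a i - b i"
  have d: "?d \<in> l2 X" using a b by (rule l2_diff)
  have z: "l2inner X ?d ?d = 0" using l2inner_diff[OF d a b] h[OF d] by simp
  have "?d = (\<lambda>i. 0)" by (rule l2_zero_if_self[OF d z])
  thus ?thesis by (simp add: fun_eq_iff)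
qed

lemma bopD1: "bop X T \<Longrightarrow> f \<in> l2 X \<Longrightarrow> T f \<in> l2 X" by (simp add: bop_def)
lemma bopD4: "bop X T \<Longrightarrow> f \<notin> l2 X \<Longrightarrow> T f = (\<lambda>i. 0)" by (simp add: bop_def)
lemma bop_lin: "bop X T \<Longrightarrow> f \<in> l2 X \<Longrightarrow> g \<in> l2 X \<Longrightarrow> T (\<lambda>i. a * f i + b * g i) = (\<lambda>i. a * T f i + b * T g i)"
  by (simp add: bop_def)
lemma bop_scale: "bop X T \<Longrightarrow> f \<in> l2 X \<Longrightarrow> T (\<lambda>i. a * f i) = (\<lambda>i. a * T f i)"
  using bop_lin[of X T f f a 0] by simp

lemma adj_char:
  assumes T: "bop X T" and S: "bop X S"
    and id: "\<And>f g. f \<in> l2 X \<Longrightarrow> g \<in> l2 X \<Longrightarrow> l2inner X (T f) g = l2inner X f (S g)"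
  shows "adj X T = S"
  unfolding adj_def
proof (rule the_equality)
  show "bop X S \<and> (\<forall>f\<in>l2 X. \<forall>g\<in>l2 X. l2inner X (T f) g = l2inner X f (S g))"
    using S id by blast
next
  fix S' assume S': "bop X S' \<and> (\<forall>f\<in>l2 X. \<forall>g\<in>l2 X. l2inner X (T f) g = l2inner X f (S' g))"
  show "S' = S"
  proof
    fix g show "S' g = S g"
    proof (cases "g \<in> l2 X")
      case True
      show ?thesis
        by (rule l2_sep[OF bopD1[OF _ True] bopD1[OF S True]]) (use S' id True in auto)
    next
      case False thus ?thesis using S' S bopD4[of X S' g] bopD4[of X S g] by simp
    qed
  qed
qed

lemma adj_ident:
  assumes T: "bop X T" and S: "bop X S"
    and id: "\<And>f g. f \<in> l2 X \<Longrightarrow> g \<in> l2 X \<Longrightarrow> l2inner X (T f) g = l2inner X f (S g)"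
    and f: "f \<in> l2 X" and g: "g \<in> l2 X"
  shows "l2inner X (T f) g = l2inner X f (adj X T g)"
  using adj_char[OF T S id] id[OF f g] by simp



definition wop :: "'i set \<Rightarrow> 'i set \<Rightarrow> ('i \<Rightarrow> 'i) \<Rightarrow> ('i \<Rightarrow> complex) \<Rightarrow> 'i opr" where
  "wop X R g c = (\<lambda>f. if f \<in> l2 X then (\<lambda>\<nu>. if \<nu> \<in> R then c \<nu> * f (g \<nu>) else 0) else (\<lambda>i. 0))"

definition wok :: "'i set \<Rightarrow> 'i set \<Rightarrow> ('i \<Rightarrow> 'i) \<Rightarrow> ('i \<Rightarrow> complex) \<Rightarrow> bool" where
  "wok X R g c \<longleftrightarrow> R \<subseteq> X \<and> inj_on g R \<and> g ` R \<subseteq> X \<and> (\<forall>\<nu>\<in>R. cmod (c \<nu>) = 1)"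

abbreviation mop :: "'i set \<Rightarrow> 'i set \<Rightarrow> 'i opr" where
  "mop X C \<equiv> wop X C id (\<lambda>_. 1)"

definition wadj :: "'i set \<Rightarrow> 'i set \<Rightarrow> ('i \<Rightarrow> 'i) \<Rightarrow> ('i \<Rightarrow> complex) \<Rightarrow> 'i opr" where
  "wadj X R g c = wop X (g ` R) (inv_into R g) (\<lambda>\<mu>. cnj (c (inv_into R g \<mu>)))"

definition dl :: "'i \<Rightarrow> 'i \<Rightarrow> complex" where
  "dl \<mu> = (\<lambda>\<nu>. if \<nu> = \<mu> then 1 else 0)"

lemma mop_wok: "C \<subseteq> X \<Longrightarrow> wok X C id (\<lambda>_. 1)"
  by (auto simp: wok_def)

lemma wop_apply: "f \<in> l2 X \<Longrightarrow> wop X R g c f \<nu> = (if \<nu> \<in> R then c \<nu> * f (g \<nu>) else 0)"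
  by (simp add: wop_def)

lemma wop_nl2: "f \<notin> l2 X \<Longrightarrow> wop X R g c f = (\<lambda>i. 0)"
  by (simp add: wop_def)

lemma wop_zero[simp]: "wop X R g c (\<lambda>i. 0) = (\<lambda>i. 0)"
  by (simp add: wop_def fun_eq_iff)

lemma wadj_zero[simp]: "wadj X R g c (\<lambda>i. 0) = (\<lambda>i. 0)"
  by (simp add: wadj_def)

lemma wop_l2_and_sum:
  assumes w: "wok X R g c" and f: "f \<in> l2 X"
  shows "wop X R g c f \<in> l2 X"
    and "(\<Sum>\<^sub>\<infinity>i\<in>X. nsq (wop X R g c f) i) = (\<Sum>\<^sub>\<infinity>i\<in>g ` R. nsq f i)"
proof -
  have RX: "R \<subseteq> X" and inj: "inj_on g R" and gR: "g ` R \<subseteq> X" and c: "\<And>\<nu>. \<nu> \<in> R \<Longrightarrow> cmod (c \<nu>) = 1"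
    using w by (auto simp: wok_def)
  let ?F = "wop X R g c f"
  have F: "\<And>\<nu>. nsq ?F \<nu> = (if \<nu> \<in> R then nsq f (g \<nu>) else 0)"
    using f c by (simp add: wop_apply norm_mult)
  have s1: "nsq f summable_on g ` R"
    using summable_on_subset_banach[OF l2_summ[OF f] gR] .
  hence s2: "(\<lambda>\<nu>. nsq f (g \<nu>)) summable_on R"
    using summable_on_reindex[OF inj, of "nsq f"] by (simp add: comp_def)
  have "nsq ?F summable_on X \<longleftrightarrow> (\<lambda>\<nu>. nsq f (g \<nu>)) summable_on R"
    by (rule summable_on_cong_neutral) (use RX in \<open>auto simp: F\<close>)
  with s2 have "nsq ?F summable_on X" by simp
  moreover have "\<And>i. i \<notin> X \<Longrightarrow> ?F i = 0" using RX f by (auto simp: wop_apply)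
  ultimately show "?F \<in> l2 X" by (simp add: l2_def)
  have "(\<Sum>\<^sub>\<infinity>i\<in>X. nsq ?F i) = (\<Sum>\<^sub>\<infinity>\<nu>\<in>R. nsq f (g \<nu>))"
    by (rule infsum_cong_neutral) (use RX in \<open>auto simp: F\<close>)
  also have "\<dots> = (\<Sum>\<^sub>\<infinity>i\<in>g ` R. nsq f i)"
    using infsum_reindex[OF inj, of "nsq f"] by (simp add: comp_def)
  finally show "(\<Sum>\<^sub>\<infinity>i\<in>X. nsq ?F i) = (\<Sum>\<^sub>\<infinity>i\<in>g ` R. nsq f i)" .
qed

lemma wop_norm:
  assumes w: "wok X R g c" and f: "f \<in> l2 X"
  shows "l2norm X (wop X R g c f) \<le> 1 * l2norm X f"
proof -
  have gR: "g ` R \<subseteq> X" using w by (auto simp: wok_def)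
  have "(\<Sum>\<^sub>\<infinity>i\<in>g ` R. nsq f i) \<le> (\<Sum>\<^sub>\<infinity>i\<in>X. nsq f i)"
    by (rule infsum_mono_neutral[OF summable_on_subset_banach[OF l2_summ[OF f] gR] l2_summ[OF f]])
       (use gR in auto)
  thus ?thesis unfolding l2norm_def wop_l2_and_sum(2)[OF w f] by simp
qed

lemma wop_lin:
  assumes f: "f \<in> l2 X" and h: "h \<in> l2 X"
  shows "wop X R g c (\<lambda>i. a * f i + b * h i) = (\<lambda>i. a * wop X R g c f i + b * wop X R g c h i)"
  using l2_lin[OF f h, of a b] f h by (auto simp: wop_apply algebra_simps)

lemma wop_bop:
  assumes w: "wok X R g c"
  shows "bop X (wop X R g c)"
  unfolding bop_def using wop_l2_and_sum(1)[OF w] wop_lin wop_norm[OF w] wop_nl2 by blast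

lemma wok_adj:
  assumes w: "wok X R g c"
  shows "wok X (g ` R) (inv_into R g) (\<lambda>\<mu>. cnj (c (inv_into R g \<mu>)))"
proof -
  have RX: "R \<subseteq> X" and inj: "inj_on g R" and gR: "g ` R \<subseteq> X" and c: "\<And>\<nu>. \<nu> \<in> R \<Longrightarrow> cmod (c \<nu>) = 1"
    using w by (auto simp: wok_def)
  have "inv_into R g ` g ` R = R" using inj by (rule inv_into_image_cancel) simp
  moreover have "inj_on (inv_into R g) (g ` R)" by (rule inj_on_inv_into) simp
  moreover have "\<forall>\<mu>\<in>g ` R. cmod (cnj (c (inv_into R g \<mu>))) = 1"
    using inj c by auto
  ultimately show ?thesis using RX gR by (simp add: wok_def)
qed

lemma wadj_apply:
  assumes w: "wok X R g c" and f: "f \<in> l2 X" and nu: "\<nu> \<in> R"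
  shows "wadj X R g c f (g \<nu>) = cnj (c \<nu>) * f \<nu>"
proof -
  have inj: "inj_on g R" using w by (simp add: wok_def)
  show ?thesis using f nu inv_into_f_f[OF inj nu] by (simp add: wadj_def wop_apply)
qed

lemma wadj_apply_out:
  assumes f: "f \<in> l2 X" and nu: "\<mu> \<notin> g ` R"
  shows "wadj X R g c f \<mu> = 0"
  using f nu by (simp add: wadj_def wop_apply)

lemma wop_ident:
  assumes w: "wok X R g c" and f: "f \<in> l2 X" and h: "h \<in> l2 X"
  shows "l2inner X (wop X R g c f) h = l2inner X f (wadj X R g c h)"
proof -
  have RX: "R \<subseteq> X" and inj: "inj_on g R" and gR: "g ` R \<subseteq> X"
    using w by (auto simp: wok_def)
  have "l2inner X (wop X R g c f) h = (\<Sum>\<^sub>\<infinity>\<nu>\<in>R. cnj (c \<nu>) * cnj (f (g \<nu>)) * h \<nu>)"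
    unfolding l2inner_def by (rule infsum_cong_neutral) (use RX f in \<open>auto simp: wop_apply\<close>)
  also have "\<dots> = (\<Sum>\<^sub>\<infinity>\<nu>\<in>R. cnj (f (g \<nu>)) * wadj X R g c h (g \<nu>))"
    by (rule infsum_cong) (simp add: wadj_apply[OF w h])
  also have "\<dots> = (\<Sum>\<^sub>\<infinity>\<mu>\<in>g ` R. cnj (f \<mu>) * wadj X R g c h \<mu>)"
    using infsum_reindex[OF inj, of "\<lambda>\<mu>. cnj (f \<mu>) * wadj X R g c h \<mu>"] by (simp add: comp_def)
  also have "\<dots> = l2inner X f (wadj X R g c h)"
    unfolding l2inner_def by (rule infsum_cong_neutral) (use gR h in \<open>auto simp: wadj_apply_out\<close>)
  finally show ?thesis .
qed

lemma wadj_bop: "wok X R g c \<Longrightarrow> bop X (wadj X R g c)"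
  unfolding wadj_def by (intro wop_bop wok_adj)

lemma wop_adj: "wok X R g c \<Longrightarrow> adj X (wop X R g c) = wadj X R g c"
  by (intro adj_char wop_bop wadj_bop wop_ident)

lemma wop_wadj:
  assumes w: "wok X R g c"
  shows "wop X R g c \<circ> wadj X R g c = mop X R"
proof (rule ext)
  fix f
  show "(wop X R g c \<circ> wadj X R g c) f = mop X R f"
  proof (cases "f \<in> l2 X")
    case True
    have c: "\<And>\<nu>. \<nu> \<in> R \<Longrightarrow> c \<nu> * cnj (c \<nu>) = 1"
      using w by (auto simp: wok_def complex_norm_square[symmetric])
    have "wadj X R g c f \<in> l2 X" using wadj_bop[OF w] True by (rule bopD1)
    thus ?thesis using True
      by (auto simp: wop_apply wadj_apply[OF w True] mult.assoc[symmetric] c)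
  next
    case False
    hence "wadj X R g c f = (\<lambda>i. 0)" by (simp add: wadj_def wop_nl2)
    thus ?thesis using False by (simp add: wop_nl2)
  qed
qed

lemma wadj_wop:
  assumes w: "wok X R g c"
  shows "wadj X R g c \<circ> wop X R g c = mop X (g ` R)"
proof (rule ext)
  fix f
  show "(wadj X R g c \<circ> wop X R g c) f = mop X (g ` R) f"
  proof (cases "f \<in> l2 X")
    case True
    have c: "\<And>\<nu>. \<nu> \<in> R \<Longrightarrow> cnj (c \<nu>) * c \<nu> = 1"
      using w by (auto simp: wok_def complex_norm_square[symmetric] mult.commute)
    have W: "wop X R g c f \<in> l2 X" using wop_bop[OF w] True by (rule bopD1)
    show ?thesis
    proof
      fix \<mu>
      show "(wadj X R g c \<circ> wop X R g c) f \<mu> = mop X (g ` R) f \<mu>"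
      proof (cases "\<mu> \<in> g ` R")
        case True2: True
        then obtain \<nu> where nu: "\<nu> \<in> R" "\<mu> = g \<nu>" by auto
        show ?thesis using nu True W
          by (simp add: wadj_apply[OF w W] wop_apply mult.assoc[symmetric] c)
      next
        case False
        thus ?thesis using True W by (simp add: wadj_apply_out wop_apply)
      qed
    qed
  next
    case False
    thus ?thesis by (simp add: wop_nl2)
  qed
qed

lemma wop_mop_wadj:
  assumes w: "wok X R g c" and C: "C \<subseteq> X"
  shows "wop X R g c \<circ> mop X C \<circ> wadj X R g c = mop X {\<nu>\<in>R. g \<nu> \<in> C}"
proof (rule ext)
  fix f
  show "(wop X R g c \<circ> mop X C \<circ> wadj X R g c) f = mop X {\<nu>\<in>R. g \<nu> \<in> C} f"
  proof (cases "f \<in> l2 X")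
    case True
    have c: "\<And>\<nu>. \<nu> \<in> R \<Longrightarrow> c \<nu> * cnj (c \<nu>) = 1"
      using w by (auto simp: wok_def complex_norm_square[symmetric])
    have A: "wadj X R g c f \<in> l2 X" using wadj_bop[OF w] True by (rule bopD1)
    have M: "mop X C (wadj X R g c f) \<in> l2 X" using wop_bop[OF mop_wok[OF C]] A by (rule bopD1)
    show ?thesis using True A M
      by (auto simp: wop_apply wadj_apply[OF w True] mult.assoc[symmetric] c)
  next
    case False
    hence "wadj X R g c f = (\<lambda>i. 0)" by (simp add: wadj_def wop_nl2)
    thus ?thesis using False by (simp add: wop_nl2)
  qed
qed

lemma mop_mop:
  assumes "C2 \<subseteq> X"
  shows "mop X C1 \<circ> mop X C2 = mop X (C1 \<inter> C2)"
proof (rule ext)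
  fix f
  show "(mop X C1 \<circ> mop X C2) f = mop X (C1 \<inter> C2) f"
  proof (cases "f \<in> l2 X")
    case True
    have "mop X C2 f \<in> l2 X" using wop_bop[OF mop_wok[OF assms]] True by (rule bopD1)
    thus ?thesis using True by (auto simp: wop_apply)
  qed (simp add: wop_nl2)
qed

lemma mop_adj:
  assumes "C \<subseteq> X"
  shows "adj X (mop X C) = mop X C"
proof (rule adj_char[OF wop_bop[OF mop_wok[OF assms]] wop_bop[OF mop_wok[OF assms]]])
  fix f h assume f: "f \<in> l2 X" and h: "h \<in> l2 X"
  show "l2inner X (mop X C f) h = l2inner X f (mop X C h)"
    unfolding l2inner_def using f h by (intro infsum_cong) (simp add: wop_apply)
qed

lemma mop_id: "f \<in> l2 X \<Longrightarrow> mop X X f = f"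
  by (auto simp: wop_apply l2D)

lemma dl_l2: "\<mu> \<in> X \<Longrightarrow> dl \<mu> \<in> l2 X"
proof -
  assume m: "\<mu> \<in> X"
  have "finite {x \<in> X. nsq (dl \<mu>) x \<noteq> 0}"
    by (rule finite_subset[of _ "{\<mu>}"]) (auto simp: dl_def)
  hence "nsq (dl \<mu>) summable_on X" by (rule finite_nonzero_values_imp_summable_on)
  thus ?thesis using m by (simp add: l2_def dl_def)
qed

lemma wop_dl:
  assumes w: "wok X R g c" and m: "\<mu> \<in> X" and nu0: "\<nu>0 \<in> R" "g \<nu>0 = \<mu>"
  shows "wop X R g c (dl \<mu>) = (\<lambda>\<nu>. c \<nu>0 * dl \<nu>0 \<nu>)"
proof
  fix \<nu>
  have inj: "inj_on g R" using w by (simp add: wok_def)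
  show "wop X R g c (dl \<mu>) \<nu> = c \<nu>0 * dl \<nu>0 \<nu>"
  proof (cases "\<nu> \<in> R \<and> g \<nu> = \<mu>")
    case True
    hence "\<nu> = \<nu>0" using inj_onD[OF inj, of \<nu> \<nu>0] nu0 by simp
    thus ?thesis using True dl_l2[OF m] by (simp add: wop_apply dl_def)
  next
    case False
    hence "\<nu> \<noteq> \<nu>0" using nu0 by auto
    thus ?thesis using False dl_l2[OF m] by (auto simp: wop_apply dl_def)
  qed
qed



lemma wop_out: "\<nu> \<notin> R \<Longrightarrow> wop X R g c f \<nu> = 0"
  by (simp add: wop_def)

lemma mop_empty: "mop X {} = zero_op"
  by (auto simp: wop_def zero_op_def fun_eq_iff)

lemma cnj_self: "cnj z * z = complex_of_real ((cmod z)^2)"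
  by (metis complex_norm_square mult.commute of_real_power)

lemma op_le_mop:
  assumes "C1 \<subseteq> C2" "C2 \<subseteq> X"
  shows "op_le X (mop X C1) (mop X C2)"
  unfolding op_le_def
proof
  fix f assume f: "f \<in> l2 X"
  have "l2inner X f (\<lambda>i. mop X C2 f i - mop X C1 f i) = (\<Sum>\<^sub>\<infinity>i\<in>X. complex_of_real (if i \<in> C2 - C1 then nsq f i else 0))"
    unfolding l2inner_def
    by (intro infsum_cong) (use f assms in \<open>auto simp: wop_apply cnj_self\<close>)
  also have "\<dots> = of_real (\<Sum>\<^sub>\<infinity>i\<in>X. (if i \<in> C2 - C1 then nsq f i else 0))"
    by (rule infsum_of_real_c)
  finally have eq: "l2inner X f (\<lambda>i. mop X C2 f i - mop X C1 f i) = of_real (\<Sum>\<^sub>\<infinity>i\<in>X. (if i \<in> C2 - C1 then nsq f i else 0))" .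
  have "0 \<le> (\<Sum>\<^sub>\<infinity>i\<in>X. (if i \<in> C2 - C1 then nsq f i else 0))"
    by (rule infsum_nonneg) simp
  thus "Im (l2inner X f (\<lambda>i. mop X C2 f i - mop X C1 f i)) = 0 \<and> 0 \<le> Re (l2inner X f (\<lambda>i. mop X C2 f i - mop X C1 f i))"
    unfolding eq by simp
qed

definition chain :: "('x \<Rightarrow> 'v) \<Rightarrow> ('x \<Rightarrow> 'v) \<Rightarrow> 'x list \<Rightarrow> bool" where
  "chain r s \<nu> \<longleftrightarrow> (\<forall>i. Suc i < length \<nu> \<longrightarrow> r (\<nu>!i) = s (\<nu>!Suc i))"

lemma chain_Cons: "chain r s (e#\<mu>) \<longleftrightarrow> (\<mu> \<noteq> [] \<longrightarrow> r e = s (hd \<mu>)) \<and> chain r s \<mu>"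
proof
  assume c: "chain r s (e#\<mu>)"
  have "\<mu> \<noteq> [] \<longrightarrow> r e = s (hd \<mu>)"
    using c[unfolded chain_def, rule_format, of 0] by (cases \<mu>) auto
  moreover have "chain r s \<mu>"
    unfolding chain_def using c[unfolded chain_def, rule_format, of "Suc _"] by auto
  ultimately show "(\<mu> \<noteq> [] \<longrightarrow> r e = s (hd \<mu>)) \<and> chain r s \<mu>" by blast
next
  assume c: "(\<mu> \<noteq> [] \<longrightarrow> r e = s (hd \<mu>)) \<and> chain r s \<mu>"
  show "chain r s (e#\<mu>)"
    unfolding chain_def
  proof (intro allI impI)
    fix i assume i: "Suc i < length (e#\<mu>)"
    show "r ((e#\<mu>)!i) = s ((e#\<mu>)!Suc i)"
    proof (cases i)
      case 0 thus ?thesis using c i by (cases \<mu>) auto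
    next
      case (Suc j) thus ?thesis using c i by (auto simp: chain_def)
    qed
  qed
qed

lemma chain_tl: "chain r s \<nu> \<Longrightarrow> chain r s (tl \<nu>)"
  by (cases \<nu>) (auto simp: chain_Cons)

locale cyc =
  fixes E1 :: "'x set" and r s :: "'x \<Rightarrow> 'v" and \<alpha> :: "'x list"
  assumes a_ne: "\<alpha> \<noteq> []" and a_set: "set \<alpha> \<subseteq> E1"
    and a_chain: "chain r s \<alpha>"
    and a_close: "s (hd \<alpha>) = r (last \<alpha>)"
    and a_min: "\<And>j. 0 < j \<Longrightarrow> j < length \<alpha> \<Longrightarrow> s (\<alpha>!j) \<noteq> s (\<alpha>!0)"
begin

abbreviation "n \<equiv> length \<alpha>"
definition "v = s (hd \<alpha>)"

definition Y :: "'x list set" where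
  "Y = {\<nu>. set \<nu> \<subseteq> E1 \<and> chain r s \<nu> \<and> (\<nu> \<noteq> [] \<longrightarrow> r (last \<nu>) = v) \<and> \<not> (\<exists>p. \<nu> = p @ \<alpha>)}"

definition "sv \<nu> = (if \<nu> = [] then v else s (hd \<nu>))"
definition "fe \<nu> = (if \<nu> = [] then hd \<alpha> else hd \<nu>)"
definition "Rg e = {\<nu>\<in>Y. fe \<nu> = e}"
definition "gg \<nu> = (if \<nu> = [] then tl \<alpha> else tl \<nu>)"
definition "cc z \<nu> = (if \<nu> = [] then z else (1::complex))"
definition "Sz z e = wop Y (Rg e) gg (cc z)"
definition "Pv w = mop Y {\<nu>\<in>Y. sv \<nu> = w}"

lemma n_pos: "0 < n" using a_ne by simp

lemma hd_nth: "hd \<alpha> = \<alpha>!0" using a_ne by (simp add: hd_conv_nth)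

lemma nil_Y: "[] \<in> Y" using a_ne by (simp add: Y_def chain_def)

lemma Y_tl: assumes "\<nu> \<in> Y" shows "tl \<nu> \<in> Y"
proof (cases \<nu>)
  case Nil thus ?thesis using assms by simp
next
  case (Cons a \<mu>)
  have "set \<mu> \<subseteq> E1" "chain r s \<mu>" using assms Cons by (auto simp: Y_def chain_Cons)
  moreover have "\<mu> \<noteq> [] \<longrightarrow> r (last \<mu>) = v" using assms Cons by (auto simp: Y_def)
  moreover have "\<not> (\<exists>p. \<mu> = p @ \<alpha>)"
  proof
    assume "\<exists>p. \<mu> = p @ \<alpha>" then obtain p where "\<mu> = p @ \<alpha>" by blast
    hence "\<nu> = (a#p) @ \<alpha>" using Cons by simp
    thus False using assms by (auto simp: Y_def)
  qed
  ultimately show ?thesis using Cons by (simp add: Y_def)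
qed

lemma tla_Y: "tl \<alpha> \<in> Y"
proof -
  have "set (tl \<alpha>) \<subseteq> E1" using a_set by (cases \<alpha>) auto
  moreover have "chain r s (tl \<alpha>)" using a_chain by (rule chain_tl)
  moreover have "tl \<alpha> \<noteq> [] \<longrightarrow> r (last (tl \<alpha>)) = v"
    using a_close a_ne unfolding v_def by (cases \<alpha>) auto
  moreover have "\<not> (\<exists>p. tl \<alpha> = p @ \<alpha>)"
  proof
    assume "\<exists>p. tl \<alpha> = p @ \<alpha>" then obtain p where "tl \<alpha> = p @ \<alpha>" by blast
    hence "length (tl \<alpha>) = length p + n" by simp
    thus False using n_pos by (simp; arith)
  qed
  ultimately show ?thesis by (simp add: Y_def)
qed

lemma Y_Cons:
  assumes mu: "\<mu> \<in> Y" and e: "e \<in> E1" and re: "r e = sv \<mu>" and ne: "e#\<mu> \<noteq> \<alpha>"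
  shows "e#\<mu> \<in> Y"
proof -
  have "set (e#\<mu>) \<subseteq> E1" using mu e by (auto simp: Y_def)
  moreover have "chain r s (e#\<mu>)" using mu re by (auto simp: Y_def chain_Cons sv_def)
  moreover have "r (last (e#\<mu>)) = v" using mu re by (auto simp: Y_def sv_def)
  moreover have "\<not> (\<exists>p. e#\<mu> = p @ \<alpha>)"
  proof
    assume "\<exists>p. e#\<mu> = p @ \<alpha>" then obtain p where p: "e#\<mu> = p @ \<alpha>" by blast
    show False
    proof (cases p)
      case Nil thus False using p ne by simp
    next
      case (Cons q p') hence "\<mu> = p' @ \<alpha>" using p by simp
      thus False using mu by (auto simp: Y_def)
    qed
  qed
  ultimately show ?thesis by (simp add: Y_def)
qed

lemma Rg_Y: "Rg e \<subseteq> Y" by (auto simp: Rg_def)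

lemma gg_Y: "\<nu> \<in> Y \<Longrightarrow> gg \<nu> \<in> Y"
  using Y_tl tla_Y by (simp add: gg_def)

lemma sv_gg: assumes "\<nu> \<in> Rg e" shows "sv (gg \<nu>) = r e"
proof (cases "\<nu> = []")
  case True
  hence e: "e = hd \<alpha>" using assms by (simp add: Rg_def fe_def)
  show ?thesis
  proof (cases "tl \<alpha> = []")
    case True2: True
    hence "\<alpha> = [hd \<alpha>]" using a_ne by (cases \<alpha>) auto
    hence "r e = r (last \<alpha>)" using e by (metis last.simps)
    thus ?thesis using True True2 a_close by (simp add: gg_def sv_def v_def)
  next
    case False
    have "r (\<alpha>!0) = s (\<alpha>!1)" using a_chain False a_ne
      by (cases \<alpha>) (auto simp: chain_def)
    moreover have "hd (tl \<alpha>) = \<alpha>!1" using False a_ne by (cases \<alpha>) (auto simp: hd_conv_nth)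
    ultimately show ?thesis using True False e by (simp add: gg_def sv_def hd_nth)
  qed
next
  case False
  then obtain \<mu> where nu: "\<nu> = e#\<mu>" using assms by (cases \<nu>) (auto simp: Rg_def fe_def)
  have Y: "\<nu> \<in> Y" using assms by (simp add: Rg_def)
  show ?thesis
  proof (cases "\<mu> = []")
    case True thus ?thesis using Y nu by (simp add: Y_def gg_def sv_def)
  next
    case False thus ?thesis using Y nu by (simp add: Y_def gg_def sv_def chain_Cons)
  qed
qed

lemma gg_image: assumes e: "e \<in> E1" shows "gg ` Rg e = {\<mu>\<in>Y. sv \<mu> = r e}"
proof
  show "gg ` Rg e \<subseteq> {\<mu>\<in>Y. sv \<mu> = r e}"
    using gg_Y sv_gg by (auto simp: Rg_def)
next
  show "{\<mu>\<in>Y. sv \<mu> = r e} \<subseteq> gg ` Rg e"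
  proof
    fix \<mu> assume mu: "\<mu> \<in> {\<mu>\<in>Y. sv \<mu> = r e}"
    show "\<mu> \<in> gg ` Rg e"
    proof (cases "e#\<mu> = \<alpha>")
      case True
      hence "[] \<in> Rg e" "gg [] = \<mu>" using nil_Y by (auto simp: Rg_def fe_def gg_def)
      thus ?thesis by (metis image_eqI)
    next
      case False
      hence "e#\<mu> \<in> Rg e" using Y_Cons[of \<mu> e] mu e by (simp add: Rg_def fe_def)
      moreover have "gg (e#\<mu>) = \<mu>" by (simp add: gg_def)
      ultimately show ?thesis by (metis image_eqI)
    qed
  qed
qed

lemma inj_gg: "inj_on gg (Rg e)"
proof
  fix a b assume a: "a \<in> Rg e" and b: "b \<in> Rg e" and ab: "gg a = gg b"
  have aY: "a \<in> Y" and bY: "b \<in> Y" using a b by (auto simp: Rg_def)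
  show "a = b"
  proof (cases "a = []"; cases "b = []")
    assume "a = []" "b = []" thus "a = b" by simp
  next
    assume an: "a = []" and bn: "b \<noteq> []"
    then obtain b' where "b = e#b'" using b by (cases b) (auto simp: Rg_def fe_def)
    moreover have "e = hd \<alpha>" using a an by (simp add: Rg_def fe_def)
    moreover have "b' = tl \<alpha>" using ab an bn \<open>b = e#b'\<close> by (simp add: gg_def)
    ultimately have "b = \<alpha>" using a_ne by simp
    hence False using bY by (auto simp: Y_def intro: exI[of _ "[]"])
    thus "a = b" ..
  next
    assume an: "a \<noteq> []" and bn: "b = []"
    then obtain a' where "a = e#a'" using a by (cases a) (auto simp: Rg_def fe_def)
    moreover have "e = hd \<alpha>" using b bn by (simp add: Rg_def fe_def)
    moreover have "a' = tl \<alpha>" using ab an bn \<open>a = e#a'\<close> by (simp add: gg_def)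
    ultimately have "a = \<alpha>" using a_ne by simp
    hence False using aY by (auto simp: Y_def intro: exI[of _ "[]"])
    thus "a = b" ..
  next
    assume an: "a \<noteq> []" and bn: "b \<noteq> []"
    hence "hd a = e" "hd b = e" using a b by (auto simp: Rg_def fe_def)
    moreover have "tl a = tl b" using ab an bn by (simp add: gg_def)
    ultimately show "a = b" using an bn by (metis list.collapse)
  qed
qed

lemma wok_S: "cmod z = 1 \<Longrightarrow> wok Y (Rg e) gg (cc z)"
  using Rg_Y inj_gg gg_Y by (auto simp: wok_def Rg_def cc_def)

lemma fe_E1: "\<nu> \<in> Y \<Longrightarrow> fe \<nu> \<in> E1"
  using a_set a_ne by (cases \<nu>) (auto simp: fe_def Y_def)

lemma sv_fe: "\<nu> \<in> Y \<Longrightarrow> s (fe \<nu>) = sv \<nu>"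
  by (simp add: fe_def sv_def v_def)

end



context cyc begin

lemma D_sub: "{\<nu>\<in>Y. sv \<nu> = w} \<subseteq> Y" by auto

lemma Pv_bop: "bop Y (Pv w)"
  unfolding Pv_def by (intro wop_bop mop_wok D_sub)

lemma Pv_proj: "is_proj Y (Pv w)"
  unfolding is_proj_def
  using Pv_bop mop_mop[OF D_sub, of "{\<nu>\<in>Y. sv \<nu> = w}" w] mop_adj[OF D_sub]
  by (simp add: Pv_def)

lemma Pv_orth: "a \<noteq> b \<Longrightarrow> Pv a \<circ> Pv b = zero_op"
proof -
  assume ab: "a \<noteq> b"
  have "{\<nu>\<in>Y. sv \<nu> = a} \<inter> {\<nu>\<in>Y. sv \<nu> = b} = {}" using ab by auto
  thus ?thesis unfolding Pv_def using mop_mop[OF D_sub, of "{\<nu>\<in>Y. sv \<nu> = a}" b] mop_empty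
    by simp
qed

lemma S_bop: "cmod z = 1 \<Longrightarrow> bop Y (Sz z e)"
  unfolding Sz_def by (intro wop_bop wok_S)

lemma S_adj: "cmod z = 1 \<Longrightarrow> adj Y (Sz z e) = wadj Y (Rg e) gg (cc z)"
  unfolding Sz_def by (intro wop_adj wok_S)

lemma S_adj_S: "cmod z = 1 \<Longrightarrow> e \<in> E1 \<Longrightarrow> adj Y (Sz z e) \<circ> Sz z e = Pv (r e)"
  using wadj_wop[OF wok_S, of z e] gg_image[of e] S_adj[of z e, unfolded Sz_def]
  by (simp add: Sz_def Pv_def)

lemma S_S_adj: "cmod z = 1 \<Longrightarrow> Sz z e \<circ> adj Y (Sz z e) = mop Y (Rg e)"
  using wop_wadj[OF wok_S, of z e] S_adj[of z e, unfolded Sz_def] by (simp add: Sz_def)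

lemma Rg_sub: "Rg e \<subseteq> {\<nu>\<in>Y. sv \<nu> = s e}"
  using sv_fe by (auto simp: Rg_def)

lemma S_le: "cmod z = 1 \<Longrightarrow> op_le Y (Sz z e \<circ> adj Y (Sz z e)) (Pv (s e))"
  unfolding S_S_adj Pv_def by (intro op_le_mop Rg_sub D_sub)

lemma S_orth:
  assumes "e \<noteq> e'"
  shows "l2inner Y (Sz z e f) (Sz z e' g) = 0"
proof -
  have Z: "\<And>i. cnj (Sz z e f i) * Sz z e' g i = 0"
  proof -
    fix i
    show "cnj (Sz z e f i) * Sz z e' g i = 0"
    proof (cases "i \<in> Rg e")
      case True
      hence "i \<notin> Rg e'" using assms by (auto simp: Rg_def)
      thus ?thesis by (simp add: Sz_def wop_out)
    next
      case False thus ?thesis by (simp add: Sz_def wop_out)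
    qed
  qed
  show ?thesis unfolding l2inner_def by (rule infsum_0) (rule Z)
qed

lemma S_CK:
  assumes z: "cmod z = 1" and fin: "finite {e \<in> E1. s e = w}"
  shows "Pv w = (\<lambda>f i. \<Sum>e\<in>{e \<in> E1. s e = w}. Sz z e (adj Y (Sz z e) f) i)"
proof (rule ext)+
  fix f i
  show "Pv w f i = (\<Sum>e\<in>{e \<in> E1. s e = w}. Sz z e (adj Y (Sz z e) f) i)"
  proof (cases "f \<in> l2 Y")
    case True
    have "(\<Sum>e\<in>{e \<in> E1. s e = w}. Sz z e (adj Y (Sz z e) f) i)
        = (\<Sum>e\<in>{e \<in> E1. s e = w}. if e = fe i then (if i \<in> Y then f i else 0) else 0)"
    proof (rule sum.cong)
      fix e assume "e \<in> {e \<in> E1. s e = w}"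
      have "Sz z e (adj Y (Sz z e) f) i = mop Y (Rg e) f i"
        using S_S_adj[OF z, of e] by (metis comp_apply)
      thus "Sz z e (adj Y (Sz z e) f) i = (if e = fe i then (if i \<in> Y then f i else 0) else 0)"
        using True by (auto simp: wop_apply Rg_def)
    qed simp
    also have "\<dots> = (if fe i \<in> {e \<in> E1. s e = w} then (if i \<in> Y then f i else 0) else 0)"
      using fin by (simp add: sum.delta')
    also have "\<dots> = Pv w f i"
      using True fe_E1 sv_fe by (auto simp: Pv_def wop_apply)
    finally show ?thesis by simp
  next
    case False
    have "adj Y (Sz z e) f = (\<lambda>i. 0)" for e
      using False by (simp add: S_adj[OF z] wadj_def wop_nl2)
    thus ?thesis using False by (simp add: Pv_def Sz_def wop_nl2)
  qed
qed

lemma ck: "cmod z = 1 \<Longrightarrow> ck_family E0 E1 r s Y Pv (Sz z)"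
  unfolding ck_family_def
  using Pv_proj Pv_orth S_bop S_orth S_adj_S S_le S_CK
  by (auto simp: regular_vertex_def)

end



context cyc begin

definition "pth \<nu> i = (if i < length \<nu> then \<nu>!i else \<alpha>!((i - length \<nu>) mod n))"
definition "cyl w = {\<nu>\<in>Y. \<forall>i<length w. pth \<nu> i = w!i}"
definition "wk k = map (\<lambda>i. \<alpha>!(i mod n)) [0..<k*n]"

primrec Qw :: "('x \<Rightarrow> 'x list opr) \<Rightarrow> 'x list \<Rightarrow> 'x list opr" where
  "Qw S [] = mop Y Y"
| "Qw S (e#w) = S e \<circ> Qw S w \<circ> adj Y (S e)"

lemma pth0: "pth \<nu> 0 = fe \<nu>"
  using a_ne by (cases \<nu>) (auto simp: pth_def fe_def hd_nth)

lemma pth_gg: "pth (gg \<nu>) i = pth \<nu> (Suc i)"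
proof (cases "\<nu> = []")
  case True
  have "pth (tl \<alpha>) i = \<alpha>!(Suc i mod n)"
  proof (cases "i < n - 1")
    case True
    thus ?thesis using n_pos by (auto simp: pth_def nth_tl)
  next
    case False
    hence "Suc i mod n = (i - (n - 1)) mod n"
      using n_pos by (metis Suc_diff_1 Suc_diff_le diff_Suc_Suc le_add_diff_inverse2 linorder_not_le mod_add_self2 not_less_eq_eq add.commute)
    thus ?thesis using False by (simp add: pth_def)
  qed
  thus ?thesis using True by (simp add: pth_def gg_def)
next
  case False
  thus ?thesis by (cases \<nu>) (auto simp: pth_def gg_def)
qed

lemma cyl_sub: "cyl w \<subseteq> Y" by (auto simp: cyl_def)

lemma cyl_Nil: "cyl [] = Y" by (simp add: cyl_def)

lemma cyl_Cons: "{\<nu>\<in>Rg e. gg \<nu> \<in> cyl w} = cyl (e#w)"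
proof -
  have "\<nu> \<in> Rg e \<and> gg \<nu> \<in> cyl w \<longleftrightarrow> \<nu> \<in> cyl (e#w)" for \<nu>
  proof
    assume a: "\<nu> \<in> Rg e \<and> gg \<nu> \<in> cyl w"
    hence Y: "\<nu> \<in> Y" and f: "fe \<nu> = e" by (auto simp: Rg_def)
    have "\<forall>i<length (e#w). pth \<nu> i = (e#w)!i"
    proof (intro allI impI)
      fix i assume "i < length (e#w)"
      thus "pth \<nu> i = (e#w)!i"
        using a f by (cases i) (auto simp: pth0 cyl_def pth_gg[symmetric])
    qed
    thus "\<nu> \<in> cyl (e#w)" using Y by (simp add: cyl_def)
  next
    assume a: "\<nu> \<in> cyl (e#w)"
    hence Y: "\<nu> \<in> Y" and p: "\<And>i. i < Suc (length w) \<Longrightarrow> pth \<nu> i = (e#w)!i" by (auto simp: cyl_def)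
    have "fe \<nu> = e" using p[of 0] by (simp add: pth0)
    moreover have "gg \<nu> \<in> cyl w"
      using p[of "Suc _"] gg_Y[OF Y] by (auto simp: cyl_def pth_gg)
    ultimately show "\<nu> \<in> Rg e \<and> gg \<nu> \<in> cyl w" using Y by (simp add: Rg_def)
  qed
  thus ?thesis by blast
qed

lemma Qw_cyl: "cmod z = 1 \<Longrightarrow> Qw (Sz z) w = mop Y (cyl w)"
proof (induction w)
  case Nil show ?case by (simp only: Qw.simps cyl_Nil)
next
  case (Cons e w)
  have "Qw (Sz z) (e#w) = wop Y (Rg e) gg (cc z) \<circ> mop Y (cyl w) \<circ> wadj Y (Rg e) gg (cc z)"
    using Cons by (simp add: S_adj Sz_def[symmetric] id_def)
  also have "\<dots> = mop Y (cyl (e#w))"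
    using wop_mop_wadj[OF wok_S[OF Cons.prems] cyl_sub] cyl_Cons by simp
  finally show ?case .
qed

lemma nil_cyl: "[] \<in> cyl (wk k)"
  using nil_Y by (auto simp: cyl_def pth_def wk_def)

lemma key_K:
  assumes Y: "\<nu> \<in> Y" and ne: "\<nu> \<noteq> []" and eq: "\<And>i. i < length \<nu> \<Longrightarrow> \<nu>!i = \<alpha>!(i mod n)"
  shows False
proof -
  define m where "m = length \<nu>"
  have m0: "0 < m" using ne by (simp add: m_def)
  define j where "j = (m - 1) mod n"
  have jn: "j < n" using n_pos by (simp add: j_def)
  have "last \<nu> = \<nu>!(m-1)" using ne by (simp add: m_def last_conv_nth)
  hence "last \<nu> = \<alpha>!j" using eq[of "m-1"] m0 by (simp add: m_def j_def)
  hence rj: "r (\<alpha>!j) = v" using Y ne by (simp add: Y_def)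
  have jlast: "j = n - 1"
  proof (rule ccontr)
    assume "j \<noteq> n - 1"
    hence j1: "Suc j < n" using jn by simp
    hence "r (\<alpha>!j) = s (\<alpha>!Suc j)" using a_chain by (simp add: chain_def)
    moreover have "s (\<alpha>!Suc j) \<noteq> s (\<alpha>!0)" using a_min[of "Suc j"] j1 by simp
    ultimately show False using rj by (simp add: v_def hd_nth)
  qed
  have mdvd: "m mod n = 0"
  proof -
    have "Suc (m - 1) mod n = 0"
      using jlast n_pos by (simp add: mod_Suc j_def)
    thus ?thesis using m0 by simp
  qed
  hence mn: "n \<le> m" using m0 n_pos by (metis mod_less not_less neq0_conv)
  have dr: "drop (m - n) \<nu> = \<alpha>"
  proof (rule nth_equalityI)
    show "length (drop (m - n) \<nu>) = length \<alpha>" using mn by (simp add: m_def)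
  next
    fix i assume "i < length (drop (m - n) \<nu>)"
    hence i: "i < n" using mn by (simp add: m_def)
    have "drop (m - n) \<nu> ! i = \<alpha>!((m - n + i) mod n)"
      using eq[of "m - n + i"] i mn by (simp add: m_def)
    also have "(m - n + i) mod n = i"
    proof -
      have "m - n + i = i + (m div n - 1) * n"
        using mdvd mn n_pos
        by (metis add.commute div_mult_mod_eq add_0_right diff_mult_distrib mult_1 mult.commute)
      thus ?thesis using i by simp
    qed
    finally show "drop (m - n) \<nu> ! i = \<alpha>!i" .
  qed
  have "\<nu> = take (m - n) \<nu> @ \<alpha>" using dr by (metis append_take_drop_id)
  thus False using Y by (auto simp: Y_def)
qed

lemma cyl_long:
  assumes c: "\<nu> \<in> cyl (wk k)" and ne: "\<nu> \<noteq> []"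
  shows "k * n < length \<nu>"
proof (rule ccontr)
  assume "\<not> k * n < length \<nu>"
  hence l: "length \<nu> \<le> k * n" by simp
  have "\<nu>!i = \<alpha>!(i mod n)" if "i < length \<nu>" for i
  proof -
    have i: "i < k * n" using that l by simp
    have "pth \<nu> i = wk k ! i" using c i by (simp add: cyl_def wk_def)
    thus ?thesis using i that by (simp add: pth_def wk_def)
  qed
  thus False using key_K[OF _ ne] c cyl_sub by blast
qed

end



lemma l2_tail:
  assumes f: "f \<in> l2 X" and e: "\<epsilon> > 0"
  shows "\<exists>F. finite F \<and> F \<subseteq> X \<and> (\<Sum>\<^sub>\<infinity>i\<in>X - F. nsq f i) < \<epsilon>"
proof -
  have e2: "\<epsilon>/2 > 0" using e by simp
  obtain F where F: "finite F" "F \<subseteq> X" "dist (sum (nsq f) F) (\<Sum>\<^sub>\<infinity>i\<in>X. nsq f i) \<le> \<epsilon>/2"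
    using infsum_finite_approximation[OF l2_summ[OF f] e2] by blast
  have "(\<Sum>\<^sub>\<infinity>i\<in>X - F. nsq f i) = (\<Sum>\<^sub>\<infinity>i\<in>X. nsq f i) - (\<Sum>\<^sub>\<infinity>i\<in>F. nsq f i)"
    by (rule infsum_Diff[OF l2_summ[OF f] _ F(2)]) (simp add: F(1))
  also have "(\<Sum>\<^sub>\<infinity>i\<in>F. nsq f i) = sum (nsq f) F" using F(1) by simp
  finally have eq: "(\<Sum>\<^sub>\<infinity>i\<in>X - F. nsq f i) = (\<Sum>\<^sub>\<infinity>i\<in>X. nsq f i) - sum (nsq f) F" .
  have "\<bar>sum (nsq f) F - (\<Sum>\<^sub>\<infinity>i\<in>X. nsq f i)\<bar> \<le> \<epsilon>/2" using F(3) by (simp add: dist_real_def)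
  hence "(\<Sum>\<^sub>\<infinity>i\<in>X - F. nsq f i) \<le> \<epsilon>/2" using eq abs_le_D2 by fastforce
  thus ?thesis using F e by (intro exI[of _ F]) auto
qed

lemma l2norm_bound:
  assumes d: "d \<in> l2 X" and f: "f \<in> l2 X"
    and z: "\<And>i. i \<in> X \<Longrightarrow> i \<in> F \<Longrightarrow> d i = 0"
    and le: "\<And>i. i \<in> X \<Longrightarrow> i \<notin> F \<Longrightarrow> cmod (d i) \<le> cmod (f i)"
  shows "l2norm X d \<le> sqrt (\<Sum>\<^sub>\<infinity>i\<in>X - F. nsq f i)"
proof -
  have "(\<Sum>\<^sub>\<infinity>i\<in>X. nsq d i) \<le> (\<Sum>\<^sub>\<infinity>i\<in>X - F. nsq f i)"
  proof (rule infsum_mono_neutral[OF l2_summ[OF d] summable_on_subset_banach[OF l2_summ[OF f]]])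
    fix i assume "i \<in> X \<inter> (X - F)"
    thus "nsq d i \<le> nsq f i" using le by (simp add: power_mono)
  next
    fix i assume "i \<in> X - (X - F)"
    thus "nsq d i \<le> 0" using z by simp
  qed auto
  thus ?thesis unfolding l2norm_def by simp
qed

lemma closedD:
  assumes "closed_subspace X K" "f \<in> l2 X" "\<And>\<epsilon>. \<epsilon> > 0 \<Longrightarrow> \<exists>g\<in>K. l2norm X (\<lambda>i. f i - g i) < \<epsilon>"
  shows "f \<in> K"
  using assms unfolding closed_subspace_def by blast

lemma closed_lin:
  "closed_subspace X K \<Longrightarrow> f \<in> K \<Longrightarrow> g \<in> K \<Longrightarrow> (\<lambda>i. a * f i + b * g i) \<in> K"
  unfolding closed_subspace_def by blast

lemma closed_sub: "closed_subspace X K \<Longrightarrow> f \<in> K \<Longrightarrow> f \<in> l2 X"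
  unfolding closed_subspace_def by blast

lemma closed_zero: "closed_subspace X K \<Longrightarrow> (\<lambda>i. 0) \<in> K"
  unfolding closed_subspace_def by blast

lemma closed_dense:
  assumes K: "closed_subspace X K" and dl: "\<And>\<mu>. \<mu> \<in> X \<Longrightarrow> dl \<mu> \<in> K"
  shows "K = l2 X"
proof
  show "K \<subseteq> l2 X" using K closed_sub by blast
next
  show "l2 X \<subseteq> K"
  proof
    fix f assume f: "f \<in> l2 X"
    have fin: "(\<lambda>i. if i \<in> F then f i else 0) \<in> K" if "finite F" "F \<subseteq> X" for F
      using that
    proof (induction F rule: finite_induct)
      case empty thus ?case using closed_zero[OF K] by simp
    next
      case (insert a F)
      have "(\<lambda>i. 1 * (if i \<in> F then f i else 0) + f a * dl a i) \<in> K"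
        using insert by (intro closed_lin[OF K] dl) auto
      moreover have "(\<lambda>i. 1 * (if i \<in> F then f i else 0) + f a * dl a i) = (\<lambda>i. if i \<in> insert a F then f i else 0)"
        using insert by (auto simp: dl_def fun_eq_iff)
      ultimately show ?case by simp
    qed
    show "f \<in> K"
    proof (rule closedD[OF K f])
      fix \<epsilon> :: real assume e: "\<epsilon> > 0"
      obtain F where F: "finite F" "F \<subseteq> X" "(\<Sum>\<^sub>\<infinity>i\<in>X - F. nsq f i) < \<epsilon>^2"
        using l2_tail[OF f, of "\<epsilon>^2"] e by auto
      let ?g = "\<lambda>i. if i \<in> F then f i else 0"
      have gK: "?g \<in> K" using fin F by blast
      have d: "(\<lambda>i. f i - ?g i) \<in> l2 X" using l2_diff[OF f closed_sub[OF K gK]] .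
      have "l2norm X (\<lambda>i. f i - ?g i) \<le> sqrt (\<Sum>\<^sub>\<infinity>i\<in>X - F. nsq f i)"
        by (rule l2norm_bound[OF d f]) auto
      also have "\<dots> < sqrt (\<epsilon>^2)" using F(3) by (rule real_sqrt_less_mono)
      also have "\<dots> = \<epsilon>" using e by simp
      finally have lt: "l2norm X (\<lambda>i. f i - ?g i) < \<epsilon>" .
      show "\<exists>g\<in>K. l2norm X (\<lambda>i. f i - g i) < \<epsilon>" by (rule bexI[OF _ gK]) (rule lt)
    qed
  qed
qed

context cyc begin

primrec Sw :: "('x \<Rightarrow> 'x list opr) \<Rightarrow> 'x list \<Rightarrow> 'x list opr" where
  "Sw S [] = mop Y Y"
| "Sw S (e#w) = S e \<circ> Sw S w"

primrec Ad :: "('x \<Rightarrow> 'x list opr) \<Rightarrow> 'x list \<Rightarrow> 'x list opr" where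
  "Ad S [] = mop Y Y"
| "Ad S (e#w) = Ad S w \<circ> adj Y (S e)"

lemma Sw_dl: assumes z: "cmod z = 1" shows "\<mu> \<in> Y \<Longrightarrow> Sw (Sz z) \<mu> (dl []) = dl \<mu>"
proof (induction \<mu>)
  case Nil thus ?case using mop_id[OF dl_l2[OF nil_Y]] by simp
next
  case (Cons e \<mu>)
  have mu: "\<mu> \<in> Y" using Y_tl[OF Cons.prems] by simp
  have "Sw (Sz z) (e#\<mu>) (dl []) = Sz z e (dl \<mu>)" using Cons.IH[OF mu] by simp
  also have "\<dots> = (\<lambda>\<nu>. cc z (e#\<mu>) * dl (e#\<mu>) \<nu>)"
    unfolding Sz_def using Cons.prems mu
    by (intro wop_dl[OF wok_S[OF z]]) (auto simp: Rg_def fe_def gg_def)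
  finally show ?case by (simp add: cc_def)
qed

lemma Ad_apply: assumes z: "cmod z = 1" shows "f \<in> l2 Y \<Longrightarrow> \<mu> \<in> Y \<Longrightarrow> Ad (Sz z) \<mu> f [] = f \<mu>"
proof (induction \<mu> arbitrary: f)
  case Nil thus ?case using mop_id[OF Nil.prems(1)] by simp
next
  case (Cons e \<mu>)
  have mu: "\<mu> \<in> Y" using Y_tl[OF Cons.prems(2)] by simp
  have a: "adj Y (Sz z e) f \<in> l2 Y" using bopD1[OF wadj_bop[OF wok_S[OF z]] Cons.prems(1)] by (simp add: S_adj[OF z])
  have "Ad (Sz z) (e#\<mu>) f [] = adj Y (Sz z e) f \<mu>" using Cons.IH[OF _ mu] a by simp
  also have "\<dots> = wadj Y (Rg e) gg (cc z) f (gg (e#\<mu>))" by (simp add: S_adj[OF z] gg_def)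
  also have "\<dots> = f (e#\<mu>)"
    using wadj_apply[OF wok_S[OF z] Cons.prems(1), of "e#\<mu>"] Cons.prems(2)
    by (simp add: Rg_def fe_def cc_def)
  finally show ?case .
qed

end



context cyc begin

lemma set_wk: "set (wk k) \<subseteq> set \<alpha>"
  using n_pos by (auto simp: wk_def)

lemma set_Y: "\<mu> \<in> Y \<Longrightarrow> set \<mu> \<subseteq> E1" by (simp add: Y_def)

context
  fixes z K
  assumes z: "cmod z = 1" and K: "closed_subspace Y K"
    and KS: "\<And>e. e \<in> E1 \<Longrightarrow> Sz z e ` K \<subseteq> K" and KA: "\<And>e. e \<in> E1 \<Longrightarrow> adj Y (Sz z e) ` K \<subseteq> K"
begin

lemma KS': "e \<in> E1 \<Longrightarrow> f \<in> K \<Longrightarrow> Sz z e f \<in> K" using KS by blast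
lemma KA': "e \<in> E1 \<Longrightarrow> f \<in> K \<Longrightarrow> adj Y (Sz z e) f \<in> K" using KA by blast

lemma Qw_K: "set w \<subseteq> E1 \<Longrightarrow> f \<in> K \<Longrightarrow> Qw (Sz z) w f \<in> K"
proof (induction w arbitrary: f)
  case Nil thus ?case using mop_id[OF closed_sub[OF K Nil.prems(2)]] by simp
next
  case (Cons e w) thus ?case using KS' KA' by simp
qed

lemma Sw_K: "set w \<subseteq> E1 \<Longrightarrow> f \<in> K \<Longrightarrow> Sw (Sz z) w f \<in> K"
proof (induction w arbitrary: f)
  case Nil thus ?case using mop_id[OF closed_sub[OF K Nil.prems(2)]] by simp
next
  case (Cons e w) thus ?case using KS' by simp
qed

lemma Ad_K: "set w \<subseteq> E1 \<Longrightarrow> f \<in> K \<Longrightarrow> Ad (Sz z) w f \<in> K"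
proof (induction w arbitrary: f)
  case Nil thus ?case using mop_id[OF closed_sub[OF K Nil.prems(2)]] by simp
next
  case (Cons e w) thus ?case using KA' by simp
qed

lemma isolate:
  assumes h: "h \<in> K" and h0: "h [] \<noteq> 0"
  shows "dl [] \<in> K"
proof -
  have hl2: "h \<in> l2 Y" using closed_sub[OF K h] .
  have dl2: "dl [] \<in> l2 Y" using dl_l2[OF nil_Y] .
  have hd2: "(\<lambda>i. h [] * dl [] i) \<in> l2 Y" using l2_lin[OF dl2 dl2, of "h []" 0] by simp
  have hdK: "(\<lambda>i. h [] * dl [] i) \<in> K"
  proof (rule closedD[OF K hd2])
    fix \<epsilon> :: real assume e: "\<epsilon> > 0"
    obtain F where F: "finite F" "F \<subseteq> Y" "(\<Sum>\<^sub>\<infinity>i\<in>Y - F. nsq h i) < \<epsilon>^2"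
      using l2_tail[OF hl2, of "\<epsilon>^2"] e by auto
    define k where "k = Suc (Max (insert 0 (length ` F)))"
    have kF: "\<And>i. i \<in> F \<Longrightarrow> length i < k * n"
    proof -
      fix i assume "i \<in> F"
      hence "length i \<le> Max (insert 0 (length ` F))" using F(1) by simp
      hence "length i < k" by (simp add: k_def)
      also have "k \<le> k * n" using n_pos by (metis One_nat_def Suc_leI mult.right_neutral mult_le_mono2)
      finally show "length i < k * n" .
    qed
    let ?g = "Qw (Sz z) (wk k) h"
    have gK: "?g \<in> K" using Qw_K[OF _ h] set_wk a_set by blast
    have g: "\<And>i. ?g i = (if i \<in> cyl (wk k) then h i else 0)"
      using hl2 by (simp add: Qw_cyl[OF z] wop_apply)
    have d: "(\<lambda>i. h [] * dl [] i - ?g i) \<in> l2 Y" using l2_diff[OF hd2 closed_sub[OF K gK]] .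
    have "l2norm Y (\<lambda>i. h [] * dl [] i - ?g i) \<le> sqrt (\<Sum>\<^sub>\<infinity>i\<in>Y - F. nsq h i)"
    proof (rule l2norm_bound[OF d hl2])
      fix i assume "i \<in> Y" "i \<in> F"
      show "h [] * dl [] i - ?g i = 0"
      proof (cases "i = []")
        case True thus ?thesis using nil_cyl[of k] by (simp add: g dl_def)
      next
        case False
        hence "i \<notin> cyl (wk k)" using cyl_long[of i k] kF[OF \<open>i \<in> F\<close>] by auto
        thus ?thesis using False by (simp add: g dl_def)
      qed
    next
      fix i assume "i \<in> Y" "i \<notin> F"
      show "cmod (h [] * dl [] i - ?g i) \<le> cmod (h i)"
      proof (cases "i = []")
        case True thus ?thesis using nil_cyl[of k] by (simp add: g dl_def)
      next
        case False thus ?thesis by (simp add: g dl_def)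
      qed
    qed
    also have "\<dots> < sqrt (\<epsilon>^2)" using F(3) by (rule real_sqrt_less_mono)
    also have "\<dots> = \<epsilon>" using e by simp
    finally have lt: "l2norm Y (\<lambda>i. h [] * dl [] i - ?g i) < \<epsilon>" .
    show "\<exists>g\<in>K. l2norm Y (\<lambda>i. h [] * dl [] i - g i) < \<epsilon>" by (rule bexI[OF _ gK]) (rule lt)
  qed
  have "(\<lambda>i. (1 / h []) * (h [] * dl [] i) + 0 * (h [] * dl [] i)) \<in> K"
    by (rule closed_lin[OF K hdK hdK])
  thus ?thesis using h0 by simp
qed

lemma K_triv: "K = {\<lambda>i. 0} \<or> K = l2 Y"
proof (cases "\<exists>f\<in>K. f \<noteq> (\<lambda>i. 0)")
  case False
  hence "K = {\<lambda>i. 0}" using closed_zero[OF K] by blast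
  thus ?thesis ..
next
  case True
  then obtain f where f: "f \<in> K" "f \<noteq> (\<lambda>i. 0)" by blast
  then obtain \<mu> where mu: "f \<mu> \<noteq> 0" by (auto simp: fun_eq_iff)
  have fl2: "f \<in> l2 Y" using closed_sub[OF K f(1)] .
  have muY: "\<mu> \<in> Y" using mu l2D[OF fl2] by blast
  have hK: "Ad (Sz z) \<mu> f \<in> K" using Ad_K[OF set_Y[OF muY] f(1)] .
  have "Ad (Sz z) \<mu> f [] = f \<mu>" using Ad_apply[OF z fl2 muY] .
  hence "dl [] \<in> K" using isolate[OF hK] mu by simp
  hence "\<And>\<mu>'. \<mu>' \<in> Y \<Longrightarrow> dl \<mu>' \<in> K" using Sw_K[OF set_Y] Sw_dl[OF z] by metis
  hence "K = l2 Y" by (rule closed_dense[OF K])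
  thus ?thesis ..
qed

end

lemma S_nonzero: assumes z: "cmod z = 1" shows "Sz z (hd \<alpha>) \<noteq> zero_op"
proof
  assume a: "Sz z (hd \<alpha>) = zero_op"
  have r: "[] \<in> Rg (hd \<alpha>)" using nil_Y by (simp add: Rg_def fe_def)
  have g: "gg [] = tl \<alpha>" by (simp add: gg_def)
  have "wop Y (Rg (hd \<alpha>)) gg (cc z) (dl (tl \<alpha>)) [] = z"
    using fun_cong[OF wop_dl[OF wok_S[OF z] tla_Y r g], of "[]"] by (simp add: cc_def dl_def)
  hence "z = 0" using a by (simp add: zero_op_def Sz_def)
  thus False using z by simp
qed

lemma irr: assumes z: "cmod z = 1" shows "ck_irreducible E0 E1 r s Y Pv (Sz z)"
  unfolding ck_irreducible_def
proof (intro conjI)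
  show "ck_family E0 E1 r s Y Pv (Sz z)" using ck[OF z] .
  show "(\<exists>v\<in>E0. Pv v \<noteq> zero_op) \<or> (\<exists>e\<in>E1. Sz z e \<noteq> zero_op)"
    using S_nonzero[OF z] a_set a_ne by (meson hd_in_set subsetD)
  show "\<forall>K. closed_subspace Y K \<and> (\<forall>v\<in>E0. Pv v ` K \<subseteq> K) \<and> (\<forall>e\<in>E1. Sz z e ` K \<subseteq> K \<and> adj Y (Sz z e) ` K \<subseteq> K)
        \<longrightarrow> K = {\<lambda>i. 0} \<or> K = l2 Y"
  proof (intro allI impI)
    fix K assume a: "closed_subspace Y K \<and> (\<forall>v\<in>E0. Pv v ` K \<subseteq> K) \<and> (\<forall>e\<in>E1. Sz z e ` K \<subseteq> K \<and> adj Y (Sz z e) ` K \<subseteq> K)"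
    show "K = {\<lambda>i. 0} \<or> K = l2 Y"
    proof (rule K_triv[OF z])
      show "closed_subspace Y K" using a by simp
      show "\<And>e. e \<in> E1 \<Longrightarrow> Sz z e ` K \<subseteq> K" using a by simp
      show "\<And>e. e \<in> E1 \<Longrightarrow> adj Y (Sz z e) ` K \<subseteq> K" using a by simp
    qed
  qed
qed

end



lemma unit_l2: "unitary_map X X U \<Longrightarrow> f \<in> l2 X \<Longrightarrow> U f \<in> l2 X"
  unfolding unitary_map_def bij_betw_def by blast

lemma unit_inner: "unitary_map X X U \<Longrightarrow> f \<in> l2 X \<Longrightarrow> g \<in> l2 X \<Longrightarrow> l2inner X (U f) (U g) = l2inner X f g"
  unfolding unitary_map_def by blast

lemma unit_scale: "unitary_map X X U \<Longrightarrow> f \<in> l2 X \<Longrightarrow> U (\<lambda>i. a * f i) = (\<lambda>i. a * U f i)"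
proof -
  assume U: "unitary_map X X U" and f: "f \<in> l2 X"
  have "U (\<lambda>i. a * f i + 0 * f i) = (\<lambda>i. a * U f i + 0 * U f i)"
    using U f unfolding unitary_map_def by blast
  thus ?thesis by simp
qed

lemma unit_zero: "unitary_map X X U \<Longrightarrow> U (\<lambda>i. 0) = (\<lambda>i. 0)"
  using unit_scale[of X U "\<lambda>i. 0" 0] by simp

lemma unit_adj:
  assumes U: "unitary_map X X U"
    and A: "\<And>a b. a \<in> l2 X \<Longrightarrow> b \<in> l2 X \<Longrightarrow> l2inner X (A a) b = l2inner X a (adj X A b)"
    and A': "\<And>a b. a \<in> l2 X \<Longrightarrow> b \<in> l2 X \<Longrightarrow> l2inner X (A' a) b = l2inner X a (adj X A' b)"
    and Al: "\<And>a. a \<in> l2 X \<Longrightarrow> A a \<in> l2 X"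
    and adjl: "\<And>a. a \<in> l2 X \<Longrightarrow> adj X A a \<in> l2 X"
    and adjl': "\<And>a. a \<in> l2 X \<Longrightarrow> adj X A' a \<in> l2 X"
    and int: "\<And>a. a \<in> l2 X \<Longrightarrow> U (A a) = A' (U a)"
    and f: "f \<in> l2 X"
  shows "U (adj X A f) = adj X A' (U f)"
proof (rule l2_sep)
  show "U (adj X A f) \<in> l2 X" using unit_l2[OF U adjl[OF f]] .
  show "adj X A' (U f) \<in> l2 X" using adjl'[OF unit_l2[OF U f]] .
next
  fix h assume h: "h \<in> l2 X"
  obtain h0 where h0: "h0 \<in> l2 X" "h = U h0"
    using U h unfolding unitary_map_def bij_betw_def by blast
  have "l2inner X h (U (adj X A f)) = l2inner X h0 (adj X A f)"
    using unit_inner[OF U h0(1) adjl[OF f]] h0 by simp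
  also have "\<dots> = l2inner X (A h0) f" using A[OF h0(1) f] by simp
  also have "\<dots> = l2inner X (U (A h0)) (U f)" using unit_inner[OF U Al[OF h0(1)] f] by simp
  also have "\<dots> = l2inner X (A' h) (U f)" using int[OF h0(1)] h0 by simp
  also have "\<dots> = l2inner X h (adj X A' (U f))" using A'[OF h unit_l2[OF U f]] .
  finally show "l2inner X h (U (adj X A f)) = l2inner X h (adj X A' (U f))" .
qed

context cyc begin

lemma adj_S_l2: "cmod z = 1 \<Longrightarrow> f \<in> l2 Y \<Longrightarrow> adj Y (Sz z e) f \<in> l2 Y"
  using bopD1[OF wadj_bop[OF wok_S]] by (simp add: S_adj)

lemma S_ident: "cmod z = 1 \<Longrightarrow> a \<in> l2 Y \<Longrightarrow> b \<in> l2 Y \<Longrightarrow> l2inner Y (Sz z e a) b = l2inner Y a (adj Y (Sz z e) b)"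
  unfolding S_adj by (simp add: Sz_def wop_ident[OF wok_S])

lemma Qw_l2: "cmod z = 1 \<Longrightarrow> f \<in> l2 Y \<Longrightarrow> Qw (Sz z) w f \<in> l2 Y"
  unfolding Qw_cyl by (rule bopD1[OF wop_bop[OF mop_wok[OF cyl_sub]]])

lemma Sw_l2: "cmod z = 1 \<Longrightarrow> f \<in> l2 Y \<Longrightarrow> Sw (Sz z) w f \<in> l2 Y"
  by (induction w arbitrary: f) (auto simp: mop_id bopD1[OF S_bop])

lemma Sw_scale: "cmod z = 1 \<Longrightarrow> f \<in> l2 Y \<Longrightarrow> Sw (Sz z) w (\<lambda>i. a * f i) = (\<lambda>i. a * Sw (Sz z) w f i)"
proof (induction w arbitrary: f)
  case Nil thus ?case using l2_lin[OF Nil.prems(2) Nil.prems(2), of a 0] by (simp add: mop_id)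
next
  case (Cons e w)
  thus ?case using bop_scale[OF S_bop[OF Cons.prems(1)] Sw_l2[OF Cons.prems]] by simp
qed

lemma Sw_alpha: "cmod z = 1 \<Longrightarrow> Sw (Sz z) \<alpha> (dl []) = (\<lambda>i. z * dl [] i)"
proof -
  assume z: "cmod z = 1"
  have a: "\<alpha> = hd \<alpha> # tl \<alpha>" using a_ne by simp
  have r: "[] \<in> Rg (hd \<alpha>)" using nil_Y by (simp add: Rg_def fe_def)
  have g: "gg [] = tl \<alpha>" by (simp add: gg_def)
  have "Sw (Sz z) \<alpha> (dl []) = Sz z (hd \<alpha>) (Sw (Sz z) (tl \<alpha>) (dl []))"
    by (subst a) simp
  also have "\<dots> = Sz z (hd \<alpha>) (dl (tl \<alpha>))" using Sw_dl[OF z tla_Y] by simp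
  also have "\<dots> = (\<lambda>i. z * dl [] i)"
    using wop_dl[OF wok_S[OF z] tla_Y r g] by (simp add: Sz_def cc_def)
  finally show ?thesis .
qed

context
  fixes z z' U
  assumes z: "cmod z = 1" and z': "cmod z' = 1" and U: "unitary_map Y Y U"
    and int: "\<And>e f. e \<in> E1 \<Longrightarrow> f \<in> l2 Y \<Longrightarrow> U (Sz z e f) = Sz z' e (U f)"
begin

lemma int_adj: assumes e: "e \<in> E1" and f: "f \<in> l2 Y" shows "U (adj Y (Sz z e) f) = adj Y (Sz z' e) (U f)"
proof -
  have i: "\<And>a. a \<in> l2 Y \<Longrightarrow> U (Sz z e a) = Sz z' e (U a)" using int[OF e] .
  have l: "\<And>a. a \<in> l2 Y \<Longrightarrow> Sz z e a \<in> l2 Y" using bopD1[OF S_bop[OF z]] .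
  show ?thesis
    using unit_adj[OF U S_ident[OF z] S_ident[OF z'] l adj_S_l2[OF z] adj_S_l2[OF z'] i f] .
qed

lemma int_Qw: "set w \<subseteq> E1 \<Longrightarrow> f \<in> l2 Y \<Longrightarrow> U (Qw (Sz z) w f) = Qw (Sz z') w (U f)"
proof (induction w arbitrary: f)
  case Nil thus ?case using unit_l2[OF U Nil.prems(2)] by (simp add: mop_id)
next
  case (Cons e w)
  have e: "e \<in> E1" and w: "set w \<subseteq> E1" using Cons.prems by auto
  have "U (Qw (Sz z) (e#w) f) = Sz z' e (U (Qw (Sz z) w (adj Y (Sz z e) f)))"
    using int[OF e Qw_l2[OF z adj_S_l2[OF z Cons.prems(2)]]] by simp
  also have "\<dots> = Sz z' e (Qw (Sz z') w (U (adj Y (Sz z e) f)))"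
    using Cons.IH[OF w adj_S_l2[OF z Cons.prems(2)]] by simp
  also have "\<dots> = Qw (Sz z') (e#w) (U f)"
    using int_adj[OF e Cons.prems(2)] by simp
  finally show ?case .
qed

lemma int_Sw: "set w \<subseteq> E1 \<Longrightarrow> f \<in> l2 Y \<Longrightarrow> U (Sw (Sz z) w f) = Sw (Sz z') w (U f)"
proof (induction w arbitrary: f)
  case Nil thus ?case using unit_l2[OF U Nil.prems(2)] by (simp add: mop_id)
next
  case (Cons e w)
  thus ?case using int[OF _ Sw_l2[OF z Cons.prems(2)]] by simp
qed

lemma zz: "z = z'"
proof -
  define u where "u = U (dl [])"
  have dl2: "dl [] \<in> l2 Y" using dl_l2[OF nil_Y] .
  have ul2: "u \<in> l2 Y" using unit_l2[OF U dl2] by (simp add: u_def)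
  have mk: "mop Y (cyl (wk k)) (dl []) = dl []" for k
    using dl2 nil_cyl[of k] by (auto simp: wop_apply dl_def)
  have uk: "mop Y (cyl (wk k)) u = u" for k
  proof -
    have "U (Qw (Sz z) (wk k) (dl [])) = Qw (Sz z') (wk k) u"
      unfolding u_def using int_Qw[OF _ dl2] set_wk a_set by blast
    thus ?thesis using mk by (simp add: Qw_cyl[OF z] Qw_cyl[OF z'] u_def)
  qed
  have ueq: "u = (\<lambda>i. u [] * dl [] i)"
  proof
    fix \<nu>
    show "u \<nu> = u [] * dl [] \<nu>"
    proof (cases "\<nu> = []")
      case True thus ?thesis by (simp add: dl_def)
    next
      case False
      have "\<nu> \<notin> cyl (wk (Suc (length \<nu>)))"
      proof
        assume "\<nu> \<in> cyl (wk (Suc (length \<nu>)))"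
        hence "Suc (length \<nu>) * n < length \<nu>" using cyl_long False by blast
        moreover have "Suc (length \<nu>) \<le> Suc (length \<nu>) * n" using n_pos by (metis One_nat_def Suc_leI mult.right_neutral mult_le_mono2)
        ultimately show False by simp
      qed
      hence "u \<nu> = 0" using fun_cong[OF uk[of "Suc (length \<nu>)"], of \<nu>] ul2 by (simp add: wop_apply)
      thus ?thesis using False by (simp add: dl_def)
    qed
  qed
  have u0: "u [] \<noteq> 0"
  proof
    assume "u [] = 0"
    hence eq: "U (dl []) = U (\<lambda>i. 0)" using ueq unit_zero[OF U] by (simp add: u_def)
    have inj: "inj_on U (l2 Y)" using U unfolding unitary_map_def bij_betw_def by blast
    have "dl ([]::'x list) = (\<lambda>i. (0::complex))"
      by (rule inj_onD[OF inj eq dl2 l2_zero])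
    hence "dl ([]::'x list) [] = 0" by simp
    thus False by (simp add: dl_def)
  qed
  have "U (Sw (Sz z) \<alpha> (dl [])) = (\<lambda>i. z * u i)"
    using Sw_alpha[OF z] unit_scale[OF U dl2] by (simp add: u_def)
  moreover have "U (Sw (Sz z) \<alpha> (dl [])) = (\<lambda>i. u [] * (z' * dl [] i))"
  proof -
    have "U (Sw (Sz z) \<alpha> (dl [])) = Sw (Sz z') \<alpha> u"
      using int_Sw[OF a_set dl2] by (simp add: u_def)
    also have "\<dots> = Sw (Sz z') \<alpha> (\<lambda>i. u [] * dl [] i)" using ueq by simp
    also have "\<dots> = (\<lambda>i. u [] * Sw (Sz z') \<alpha> (dl []) i)" using Sw_scale[OF z' dl2] by simp
    also have "\<dots> = (\<lambda>i. u [] * (z' * dl [] i))" using Sw_alpha[OF z'] by simp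
    finally show ?thesis .
  qed
  ultimately have "z * u [] = u [] * z'" using fun_cong[of _ _ "[]"] by (metis dl_def mult.right_neutral)
  thus ?thesis using u0 by simp
qed

end

lemma ineq:
  assumes z: "cmod z = 1" and z': "cmod z' = 1"
    and eq: "unit_equiv E0 E1 (Y, Pv, Sz z) (Y, Pv, Sz z')"
  shows "z = z'"
proof -
  obtain U where U: "unitary_map Y Y U" and int: "\<forall>e\<in>E1. \<forall>f\<in>l2 Y. U (Sz z e f) = Sz z' e (U f)"
    using eq unfolding unit_equiv_def by auto
  show ?thesis by (rule zz[OF z z' U]) (use int in blast)
qed

end



lemma min_cycle:
  assumes "has_cycle E1 r s"
  shows "\<exists>\<alpha>. cyc E1 r s \<alpha>"
proof -
  define cy where "cy es \<longleftrightarrow> es \<noteq> [] \<and> set es \<subseteq> E1 \<and> chain r s es \<and> s (hd es) = r (last es)" for es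
  have ex: "\<exists>m. \<exists>es. cy es \<and> length es = m"
    using assms by (auto simp: has_cycle_def cy_def chain_def)
  obtain m where m: "\<exists>es. cy es \<and> length es = m" and mmin: "\<And>k. k < m \<Longrightarrow> \<not> (\<exists>es. cy es \<and> length es = k)"
    using exists_least_iff[THEN iffD1, OF ex] by blast
  obtain \<alpha> where a: "cy \<alpha>" and al: "length \<alpha> = m" using m by blast
  have "cyc E1 r s \<alpha>"
  proof
    show "\<alpha> \<noteq> []" "set \<alpha> \<subseteq> E1" "chain r s \<alpha>" "s (hd \<alpha>) = r (last \<alpha>)" using a by (auto simp: cy_def)
  next
    fix j assume j: "0 < j" "j < length \<alpha>"
    show "s (\<alpha>!j) \<noteq> s (\<alpha>!0)"
    proof
      assume eq: "s (\<alpha>!j) = s (\<alpha>!0)"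
      have "cy (take j \<alpha>)"
        unfolding cy_def
      proof (intro conjI)
        show "take j \<alpha> \<noteq> []" using j by (cases \<alpha>) auto
        show "set (take j \<alpha>) \<subseteq> E1" using a set_take_subset[of j \<alpha>] by (auto simp: cy_def)
        show "chain r s (take j \<alpha>)" using a by (auto simp: cy_def chain_def)
        have ne: "take j \<alpha> \<noteq> []" using j by (cases \<alpha>) auto
        have "r (last (take j \<alpha>)) = r (\<alpha>!(j - 1))" using j ne by (simp add: last_conv_nth min_def)
        also have "\<dots> = s (\<alpha>!j)" using a j by (auto simp: cy_def chain_def)
        also have "\<dots> = s (hd (take j \<alpha>))" using eq j ne by (simp add: hd_conv_nth)
        finally show "s (hd (take j \<alpha>)) = r (last (take j \<alpha>))" by simp
      qed
      moreover have "length (take j \<alpha>) < m" using j al by simp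
      ultimately show False using mmin by blast
    qed
  qed
  thus ?thesis ..
qed

lemma cycle_Inr:
  assumes "has_cycle E1 rng src"
  shows "has_cycle (Inr ` E1 :: ('v + 'e) set) (\<lambda>x. rng (projr x)) (\<lambda>x. src (projr x))"
proof -
  obtain es where es: "es \<noteq> []" "set es \<subseteq> E1" "\<forall>i. Suc i < length es \<longrightarrow> rng (es ! i) = src (es ! Suc i)"
    "src (hd es) = rng (last es)" using assms by (auto simp: has_cycle_def)
  show ?thesis unfolding has_cycle_def
    by (rule exI[of _ "map Inr es"]) (use es in \<open>auto simp: hd_map last_map\<close>)
qed

lemma irr_transport:
  assumes "ck_irreducible E0 (Inr ` E1 :: ('v + 'e) set) (\<lambda>x. rng (projr x)) (\<lambda>x. src (projr x)) X P S"
  shows "ck_irreducible E0 E1 rng src X P (\<lambda>e. S (Inr e))"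
proof -
  have reg: "regular_vertex E1 src w \<longleftrightarrow> regular_vertex (Inr ` E1 :: ('v + 'e) set) (\<lambda>x. src (projr x)) w" for w
  proof -
    have "{x \<in> (Inr ` E1 :: ('v + 'e) set). src (projr x) = w} = Inr ` {e \<in> E1. src e = w}" by auto
    thus ?thesis unfolding regular_vertex_def by (simp add: finite_image_iff)
  qed
  have sm: "(\<Sum>x\<in>{x \<in> (Inr ` E1 :: ('v + 'e) set). src (projr x) = w}. S x (adj X (S x) f) i)
      = (\<Sum>e\<in>{e \<in> E1. src e = w}. S (Inr e) (adj X (S (Inr e)) f) i)" for w f i
  proof -
    have "{x \<in> (Inr ` E1 :: ('v + 'e) set). src (projr x) = w} = Inr ` {e \<in> E1. src e = w}" by auto
    thus ?thesis by (simp add: sum.reindex)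
  qed
  show ?thesis
    using assms unfolding ck_irreducible_def ck_family_def
    by (simp add: reg sm)
qed



lemma unit_equiv_refl: "unit_equiv E0 E1 (X, P, S) (X, P, S)"
proof -
  have "unitary_map X X (\<lambda>f. f)" unfolding unitary_map_def by (simp add: bij_betw_def)
  thus ?thesis unfolding unit_equiv_def by auto
qed

lemma unit_equiv_transport:
  assumes "unit_equiv E0 E1 (X, P, \<lambda>e. S (Inr e)) (X, P, \<lambda>e. S' (Inr e))"
  shows "unit_equiv E0 (Inr ` E1 :: ('v + 'e) set) (X, P, S) (X, P, S')"
  using assms unfolding unit_equiv_def by auto

lemma sphere_uncountable: "uncountable (sphere (0::complex) 1)"
proof (rule connected_uncountable)
  show "connected (sphere (0::complex) 1)" by (rule connected_sphere) simp
  show "(1::complex) \<in> sphere 0 1" by simp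
  show "(-1::complex) \<in> sphere 0 1" by simp
  show "(1::complex) \<noteq> -1" by simp
qed

theorem lemma4p2:
  fixes E0 :: "'v set" and E1 :: "'e set" and rng src :: "'e \<Rightarrow> 'v"
  assumes "rng ` E1 \<subseteq> E0" and "src ` E1 \<subseteq> E0"
    and "countable (irrep_classes E0 E1 rng src)"
  shows "\<not> has_cycle E1 rng src"
proof
  assume hc: "has_cycle E1 rng src"
  obtain \<alpha> where c: "cyc (Inr ` E1 :: ('v + 'e) set) (\<lambda>x. rng (projr x)) (\<lambda>x. src (projr x)) \<alpha>"
    using min_cycle[OF cycle_Inr[OF hc]] by blast
  interpret C: cyc "Inr ` E1 :: ('v + 'e) set" "\<lambda>x. rng (projr x)" "\<lambda>x. src (projr x)" \<alpha> by (rule c)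
  define rep where "rep z = (C.Y, C.Pv, \<lambda>e. C.Sz z (Inr e))" for z
  define R where "R = {(a, b). a \<in> irreps E0 E1 rng src \<and> b \<in> irreps E0 E1 rng src \<and> unit_equiv E0 E1 a b}"
  have repI: "rep z \<in> irreps E0 E1 rng src" if z: "z \<in> sphere 0 1" for z
  proof -
    have "cmod z = 1" using z by simp
    from irr_transport[OF C.irr[OF this, of E0]]
    show ?thesis by (simp add: rep_def irreps_def)
  qed
  define \<phi> where "\<phi> z = R `` {rep z}" for z
  have inj: "inj_on \<phi> (sphere 0 1)"
  proof
    fix z z' assume z: "z \<in> sphere 0 1" and z': "z' \<in> sphere 0 1" and eq: "\<phi> z = \<phi> z'"
    have "(rep z', rep z') \<in> R" using repI[OF z'] unit_equiv_refl by (simp add: R_def rep_def)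
    hence "(rep z, rep z') \<in> R" using eq by (auto simp: \<phi>_def)
    hence "unit_equiv E0 E1 (rep z) (rep z')" by (simp add: R_def)
    hence "unit_equiv E0 (Inr ` E1 :: ('v + 'e) set) (C.Y, C.Pv, C.Sz z) (C.Y, C.Pv, C.Sz z')"
      unfolding rep_def by (rule unit_equiv_transport)
    thus "z = z'" using C.ineq z z' by simp
  qed
  have "\<phi> ` sphere 0 1 \<subseteq> irrep_classes E0 E1 rng src"
  proof
    fix c assume "c \<in> \<phi> ` sphere 0 1"
    then obtain z where z: "z \<in> sphere 0 1" "c = R `` {rep z}" by (auto simp: \<phi>_def)
    have "R `` {rep z} \<in> irreps E0 E1 rng src // R" by (rule quotientI[OF repI[OF z(1)]])
    thus "c \<in> irrep_classes E0 E1 rng src" using z(2) by (simp add: irrep_classes_def R_def)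
  qed
  hence "countable (\<phi> ` sphere 0 1)" using assms(3) countable_subset by blast
  hence "countable (sphere (0::complex) 1)" using countable_image_inj_on inj by blast
  thus False using sphere_uncountable by blast
qed


end
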